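(* Let $C$ be a curve of genus $g$ over an algebraically closed field of characteristic $p>0$, with Hasse-Witt matrix $H=(h_{i,j})_{1\le i,j\le g}$. Assume that either $H$ is diagonal, or $H$ is anti-diagonal (i.e. $h_{i,j}=0$ unless $j=g-i+1$) and for each $1\le i\le g$ either $h_{i,g-i+1}=h_{g-i+1,i}=0$ or both $h_{i,g-i+1}\neq 0$ and $h_{g-i+1,i}\neq 0$. Then $\mathrm{rank}(H)$ equals the $p$-rank of $C$. Consequently, any supersingular curve of genus $g$ whose Hasse-Witt matrix satisfies this assumption is superspecial (i.e. has $a$-number $g$).
   Context: The Hasse-Witt matrix $H$ of $C$ with respect to a basis $v_1,\dots,v_g$ of $H^1(C,\mathcal O_C)$ is defined by $(\mathrm{Frob}_C^*(v_1),\dots,\mathrm{Frob}_C^*(v_g))=(v_1,\dots,v_g)H$, where $\mathrm{Frob}_C^*$ is the $p$-linear map induced by the absolute Frobenius. The $p$-rank $f_C$ is defined by $\#J(C)[p]=p^{f_C}$ and equals $\mathrm{rank}(H H^{(p)}\cdots H^{(p^{g-1})})$, where $H^{(p^i)}$ is $H$ with entries raised to the $p^i$-th power. The $a$-number is $g-\mathrm{rank}(H)$. $C$ is superspecial if $J(C)$ is isomorphic to a product of supersingular elliptic curves (equivalently $H=0$); $C$ is supersingular if $J(C)$ is isogenous to a product of supersingular elliptic curves. *)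

theory Defs
  imports "HOL-Computational_Algebra.Polynomial" "Jordan_Normal_Form.DL_Rank"
begin

text \<open>Hasse-Witt matrices are g x g matrices (type 'a mat, indices 0..g-1) over a field.
  Entry-wise Frobenius twist H^(p^i): entries raised to the (p^i)-th power.\<close>

definition frob_twist :: "nat \<Rightarrow> nat \<Rightarrow> 'a::field mat \<Rightarrow> 'a mat" where
  "frob_twist p i H = map_mat (\<lambda>x. x ^ (p ^ i)) H"

definition hw_iterate :: "nat \<Rightarrow> nat \<Rightarrow> 'a::field mat \<Rightarrow> 'a mat" where
  "hw_iterate p g H = foldr (\<lambda>M N. M * N) (map (\<lambda>i. frob_twist p i H) [0..<g]) (1\<^sub>m g)"

definition p_rank :: "nat \<Rightarrow> nat \<Rightarrow> 'a::field mat \<Rightarrow> nat" where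
  "p_rank p g H = vec_space.rank g (hw_iterate p g H)"

definition a_number :: "nat \<Rightarrow> 'a::field mat \<Rightarrow> nat" where
  "a_number g H = g - vec_space.rank g H"

definition diagonal_hw :: "nat \<Rightarrow> 'a::field mat \<Rightarrow> bool" where
  "diagonal_hw g H \<longleftrightarrow> (\<forall>i<g. \<forall>j<g. i \<noteq> j \<longrightarrow> H $$ (i, j) = 0)"

text \<open>Anti-diagonal (1-indexed: h_{i,j} = 0 unless j = g-i+1; 0-indexed: j = g-1-i),
  with paired vanishing condition on h_{i,g-i+1} and h_{g-i+1,i}.\<close>
definition antidiagonal_paired_hw :: "nat \<Rightarrow> 'a::field mat \<Rightarrow> bool" where
  "antidiagonal_paired_hw g H \<longleftrightarrow>
     (\<forall>i<g. \<forall>j<g. j \<noteq> g - 1 - i \<longrightarrow> H $$ (i, j) = 0) \<and>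
     (\<forall>i<g. (H $$ (i, g - 1 - i) = 0 \<and> H $$ (g - 1 - i, i) = 0) \<or>
            (H $$ (i, g - 1 - i) \<noteq> 0 \<and> H $$ (g - 1 - i, i) \<noteq> 0))"

end

theory Submission
  imports Defs
begin

lemma (in vec_space) rank_mult_le:
  assumes A: "A \<in> carrier_mat n n" and B: "B \<in> carrier_mat n n"
  shows "rank (A * B) \<le> rank A"
proof -
  define W where "W = span (set (cols A))"
  have AB: "A * B \<in> carrier_mat n n" using A B by auto
  have "set (cols (A * B)) \<subseteq> W"
  proof
    fix x assume "x \<in> set (cols (A * B))"
    then obtain j where j: "j < n" "x = col (A * B) j"
      using AB by (metis cols_length cols_nth in_set_conv_nth carrier_matD(2))
    then have "x = A *\<^sub>v col B j" using A B by auto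
    moreover have "col B j \<in> carrier_vec (dim_col A)" using A B j by auto
    ultimately have "x \<in> col_space A" using col_space_eq[OF A] A by auto
    then show "x \<in> W" unfolding W_def col_space_def .
  qed
  have sW: "subspace class_ring W V"
    unfolding W_def using A cols_dim carrier_matD(1) span_is_subspace by metis
  then have "span (set (cols (A * B))) \<subseteq> W"
    by (simp add: \<open>set (cols (A * B)) \<subseteq> W\<close> span_is_subset subspace_def)
  have "subspace class_ring (span (set (cols (A * B)))) V"
    using AB cols_dim carrier_matD(1) span_is_subspace by metis
  then have sub: "subspace class_ring (span (set (cols (A * B)))) (vs W)"
    using nested_subspaces[OF sW] \<open>span (set (cols (A * B))) \<subseteq> W\<close> by blast
  have fW: "vectorspace.fin_dim class_ring (vs W)"
    using W_def A fin_dim_span_cols by auto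
  have "vectorspace.fin_dim class_ring (span_vs (set (cols (A * B))))"
    using AB fin_dim_span_cols by blast
  then show ?thesis unfolding rank_def W_def[symmetric]
    using vectorspace.subspace_dim[OF subspace_is_vs[OF sW] sub fW] by auto
qed


lemma supp_mult_entry:
  fixes A B :: "'a::field mat"
  assumes A: "A \<in> carrier_mat g g" and B: "B \<in> carrier_mat g g"
    and sig: "\<And>i. i < g \<Longrightarrow> \<sigma> i < g"
    and supp: "\<And>i j. i < g \<Longrightarrow> j < g \<Longrightarrow> j \<noteq> \<sigma> i \<Longrightarrow> A $$ (i, j) = 0"
    and i: "i < g" and j: "j < g"
  shows "(A * B) $$ (i, j) = A $$ (i, \<sigma> i) * B $$ (\<sigma> i, j)"
proof -
  have "(A * B) $$ (i, j) = (\<Sum>k\<in>{0..<g}. A $$ (i, k) * B $$ (k, j))"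
    using A B i j by (simp add: index_mult_mat scalar_prod_def)
  also have "\<dots> = (\<Sum>k\<in>{0..<g}. if k = \<sigma> i then A $$ (i, \<sigma> i) * B $$ (\<sigma> i, j) else 0)"
    by (rule sum.cong) (use supp i in auto)
  also have "\<dots> = A $$ (i, \<sigma> i) * B $$ (\<sigma> i, j)"
    using sig[OF i] by (simp add: sum.delta)
  finally show ?thesis .
qed

lemma rank_le_monomial:
  fixes H P :: "'a::field mat"
  assumes H: "H \<in> carrier_mat g g" and P: "P \<in> carrier_mat g g"
    and sig: "\<And>i. i < g \<Longrightarrow> \<sigma> i < g \<and> \<sigma> (\<sigma> i) = i"
    and tau: "\<And>i. i < g \<Longrightarrow> \<tau> i < g \<and> \<tau> (\<tau> i) = i"
    and suppH: "\<And>i j. i < g \<Longrightarrow> j < g \<Longrightarrow> j \<noteq> \<sigma> i \<Longrightarrow> H $$ (i, j) = 0"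
    and suppP: "\<And>i j. i < g \<Longrightarrow> j < g \<Longrightarrow> j \<noteq> \<tau> i \<Longrightarrow> P $$ (i, j) = 0"
    and nz: "\<And>i. i < g \<Longrightarrow> (H $$ (i, \<sigma> i) = 0 \<longleftrightarrow> P $$ (i, \<tau> i) = 0)"
  shows "vec_space.rank g P \<le> vec_space.rank g H"
proof -
  define Q where "Q = mat g g (\<lambda>(k, j). if j = \<tau> (\<sigma> k) then P $$ (\<sigma> k, j) / H $$ (\<sigma> k, k) else 0)"
  have Q: "Q \<in> carrier_mat g g" unfolding Q_def by auto
  have "H * Q = P"
  proof (rule eq_matI)
    fix i j assume i: "i < dim_row P" and j: "j < dim_col P"
    then have i: "i < g" and j: "j < g" using P by auto
    have "(H * Q) $$ (i, j) = H $$ (i, \<sigma> i) * Q $$ (\<sigma> i, j)"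
      by (rule supp_mult_entry[OF H Q _ suppH i j]) (use sig in auto)
    also have "\<dots> = P $$ (i, j)"
    proof (cases "j = \<tau> i")
      case True
      then show ?thesis using sig[OF i] nz[OF i] i j unfolding Q_def by auto
    next
      case False
      then show ?thesis using sig[OF i] suppP[OF i j] i j unfolding Q_def by auto
    qed
    finally show "(H * Q) $$ (i, j) = P $$ (i, j)" .
  qed (use H P Q in auto)
  then show ?thesis using vec_space.rank_mult_le[OF H Q] by simp
qed

lemma rank_eq_monomial:
  fixes H P :: "'a::field mat"
  assumes H: "H \<in> carrier_mat g g" and P: "P \<in> carrier_mat g g"
    and sig: "\<And>i. i < g \<Longrightarrow> \<sigma> i < g \<and> \<sigma> (\<sigma> i) = i"
    and tau: "\<And>i. i < g \<Longrightarrow> \<tau> i < g \<and> \<tau> (\<tau> i) = i"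
    and suppH: "\<And>i j. i < g \<Longrightarrow> j < g \<Longrightarrow> j \<noteq> \<sigma> i \<Longrightarrow> H $$ (i, j) = 0"
    and suppP: "\<And>i j. i < g \<Longrightarrow> j < g \<Longrightarrow> j \<noteq> \<tau> i \<Longrightarrow> P $$ (i, j) = 0"
    and nz: "\<And>i. i < g \<Longrightarrow> (H $$ (i, \<sigma> i) = 0 \<longleftrightarrow> P $$ (i, \<tau> i) = 0)"
  shows "vec_space.rank g H = vec_space.rank g P"
proof -
  have "vec_space.rank g P \<le> vec_space.rank g H"
    by (rule rank_le_monomial[OF H P, of \<sigma> \<tau>]) (use sig tau suppH suppP nz in auto)
  moreover have "vec_space.rank g H \<le> vec_space.rank g P"
    by (rule rank_le_monomial[OF P H, of \<tau> \<sigma>]) (use sig tau suppH suppP nz in auto)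
  ultimately show ?thesis by simp
qed


definition tauf :: "(nat \<Rightarrow> nat) \<Rightarrow> nat \<Rightarrow> nat \<Rightarrow> nat" where
  "tauf \<sigma> n i = (if even n then i else \<sigma> i)"

lemma iterate_struct:
  fixes H :: "'a::field mat"
  assumes p0: "p > 0" and H: "H \<in> carrier_mat g g"
    and sig: "\<And>i. i < g \<Longrightarrow> \<sigma> i < g \<and> \<sigma> (\<sigma> i) = i"
    and suppH: "\<And>i j. i < g \<Longrightarrow> j < g \<Longrightarrow> j \<noteq> \<sigma> i \<Longrightarrow> H $$ (i, j) = 0"
    and pair: "\<And>i. i < g \<Longrightarrow> (H $$ (i, \<sigma> i) = 0 \<longleftrightarrow> H $$ (\<sigma> i, i) = 0)"
  shows "foldr (\<lambda>M N. M * N) (map (\<lambda>i. frob_twist p i H) xs) (1\<^sub>m g) \<in> carrier_mat g g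
    \<and> (\<forall>i<g. \<forall>j<g. j \<noteq> tauf \<sigma> (length xs) i \<longrightarrow>
          foldr (\<lambda>M N. M * N) (map (\<lambda>i. frob_twist p i H) xs) (1\<^sub>m g) $$ (i, j) = 0)
    \<and> (\<forall>i<g. foldr (\<lambda>M N. M * N) (map (\<lambda>i. frob_twist p i H) xs) (1\<^sub>m g) $$ (i, tauf \<sigma> (length xs) i) \<noteq> 0
          \<longleftrightarrow> (xs = [] \<or> H $$ (i, \<sigma> i) \<noteq> 0))"
proof (induction xs)
  case Nil
  then show ?case by (auto simp: tauf_def)
next
  case (Cons x xs)
  define N where "N = foldr (\<lambda>M N. M * N) (map (\<lambda>i. frob_twist p i H) xs) (1\<^sub>m g)"
  define T where "T = frob_twist p x H"
  have N: "N \<in> carrier_mat g g" using Cons.IH N_def by simp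
  have T: "T \<in> carrier_mat g g" using H unfolding T_def frob_twist_def by auto
  have Tij: "T $$ (i, j) = H $$ (i, j) ^ (p ^ x)" if "i < g" "j < g" for i j
    using H that unfolding T_def frob_twist_def by auto
  have suppT: "T $$ (i, j) = 0" if "i < g" "j < g" "j \<noteq> \<sigma> i" for i j
    using Tij suppH that p0 by simp
  have suppN: "\<And>i j. i < g \<Longrightarrow> j < g \<Longrightarrow> j \<noteq> tauf \<sigma> (length xs) i \<Longrightarrow> N $$ (i, j) = 0"
    using Cons.IH N_def by simp
  have nzN: "\<And>i. i < g \<Longrightarrow> N $$ (i, tauf \<sigma> (length xs) i) \<noteq> 0 \<longleftrightarrow> (xs = [] \<or> H $$ (i, \<sigma> i) \<noteq> 0)"
    using Cons.IH N_def by simp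
  have eq: "foldr (\<lambda>M N. M * N) (map (\<lambda>i. frob_twist p i H) (x # xs)) (1\<^sub>m g) = T * N"
    by (simp add: N_def T_def)
  have entry: "(T * N) $$ (i, j) = T $$ (i, \<sigma> i) * N $$ (\<sigma> i, j)" if "i < g" "j < g" for i j
    by (rule supp_mult_entry[OF T N _ suppT that]) (use sig in auto)
  have tau_step: "tauf \<sigma> (length xs) (\<sigma> i) = tauf \<sigma> (length (x # xs)) i" if "i < g" for i
    using sig[OF that] by (simp add: tauf_def)
  have tau_lt: "tauf \<sigma> n i < g" if "i < g" for i n
    using sig[OF that] that by (simp add: tauf_def)
  show ?case
  proof (intro conjI allI impI)
    show "foldr (\<lambda>M N. M * N) (map (\<lambda>i. frob_twist p i H) (x # xs)) (1\<^sub>m g) \<in> carrier_mat g g"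
      unfolding eq using T N by auto
  next
    fix i j assume i: "i < g" and j: "j < g" and ne: "j \<noteq> tauf \<sigma> (length (x # xs)) i"
    have "N $$ (\<sigma> i, j) = 0" using suppN[of "\<sigma> i" j] sig[OF i] j ne tau_step[OF i] by auto
    then show "foldr (\<lambda>M N. M * N) (map (\<lambda>i. frob_twist p i H) (x # xs)) (1\<^sub>m g) $$ (i, j) = 0"
      unfolding eq entry[OF i j] by simp
  next
    fix i assume i: "i < g"
    have si: "\<sigma> i < g" "\<sigma> (\<sigma> i) = i" using sig[OF i] by auto
    have "(T * N) $$ (i, tauf \<sigma> (length (x # xs)) i) = T $$ (i, \<sigma> i) * N $$ (\<sigma> i, tauf \<sigma> (length xs) (\<sigma> i))"
      using entry[OF i tau_lt[OF i]] tau_step[OF i] by simp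
    also have "\<dots> \<noteq> 0 \<longleftrightarrow> H $$ (i, \<sigma> i) \<noteq> 0"
      using Tij[OF i si(1)] nzN[OF si(1)] si pair[OF i] p0 by auto
    finally show "foldr (\<lambda>M N. M * N) (map (\<lambda>i. frob_twist p i H) (x # xs)) (1\<^sub>m g) $$ (i, tauf \<sigma> (length (x # xs)) i) \<noteq> 0
          \<longleftrightarrow> (x # xs = [] \<or> H $$ (i, \<sigma> i) \<noteq> 0)" unfolding eq by simp
  qed
qed

lemma main_gen:
  fixes H :: "'a::field mat"
  assumes p0: "p > 0" and H: "H \<in> carrier_mat g g"
    and sig: "\<And>i. i < g \<Longrightarrow> \<sigma> i < g \<and> \<sigma> (\<sigma> i) = i"
    and suppH: "\<And>i j. i < g \<Longrightarrow> j < g \<Longrightarrow> j \<noteq> \<sigma> i \<Longrightarrow> H $$ (i, j) = 0"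
    and pair: "\<And>i. i < g \<Longrightarrow> (H $$ (i, \<sigma> i) = 0 \<longleftrightarrow> H $$ (\<sigma> i, i) = 0)"
  shows "vec_space.rank g H = p_rank p g H"
proof -
  note S = iterate_struct[OF p0 H sig suppH pair, of "[0..<g]"]
  define P where "P = hw_iterate p g H"
  have P: "P \<in> carrier_mat g g" using S unfolding P_def hw_iterate_def by simp
  show ?thesis unfolding p_rank_def P_def[symmetric]
  proof (rule rank_eq_monomial[OF H P, of \<sigma> "tauf \<sigma> g"])
    show "\<And>i. i < g \<Longrightarrow> \<sigma> i < g \<and> \<sigma> (\<sigma> i) = i" by (rule sig)
    show "\<And>i. i < g \<Longrightarrow> tauf \<sigma> g i < g \<and> tauf \<sigma> g (tauf \<sigma> g i) = i"
      using sig by (simp add: tauf_def)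
    show "\<And>i j. i < g \<Longrightarrow> j < g \<Longrightarrow> j \<noteq> \<sigma> i \<Longrightarrow> H $$ (i, j) = 0" by (rule suppH)
    show "\<And>i j. i < g \<Longrightarrow> j < g \<Longrightarrow> j \<noteq> tauf \<sigma> g i \<Longrightarrow> P $$ (i, j) = 0"
      using S unfolding P_def hw_iterate_def by simp
    show "\<And>i. i < g \<Longrightarrow> (H $$ (i, \<sigma> i) = 0 \<longleftrightarrow> P $$ (i, tauf \<sigma> g i) = 0)"
      using S unfolding P_def hw_iterate_def by auto
  qed
qed

theorem lemma2p13:
  fixes H :: "'a::alg_closed_field mat" and g p :: nat
  assumes "prime p" and "CHAR('a) = p"
    and "H \<in> carrier_mat g g"
    and "diagonal_hw g H \<or> antidiagonal_paired_hw g H"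
  shows "vec_space.rank g H = p_rank p g H \<and> (p_rank p g H = 0 \<longrightarrow> a_number g H = g)"
proof -
  have p0: "p > 0" using assms(1) prime_gt_0_nat by blast
  have r: "vec_space.rank g H = p_rank p g H"
    using assms(4)
  proof
    assume d: "diagonal_hw g H"
    show ?thesis
      by (rule main_gen[OF p0 assms(3), of "\<lambda>i. i"]) (use d in \<open>auto simp: diagonal_hw_def\<close>)
  next
    assume d: "antidiagonal_paired_hw g H"
    show ?thesis
    proof (rule main_gen[OF p0 assms(3), of "\<lambda>i. g - 1 - i"])
      show "\<And>i. i < g \<Longrightarrow> g - 1 - i < g \<and> g - 1 - (g - 1 - i) = i" by auto
      show "\<And>i j. i < g \<Longrightarrow> j < g \<Longrightarrow> j \<noteq> g - 1 - i \<Longrightarrow> H $$ (i, j) = 0"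
        using d unfolding antidiagonal_paired_hw_def by blast
      show "\<And>i. i < g \<Longrightarrow> (H $$ (i, g - 1 - i) = 0 \<longleftrightarrow> H $$ (g - 1 - i, i) = 0)"
        using d unfolding antidiagonal_paired_hw_def by blast
    qed
  qed
  then show ?thesis by (simp add: a_number_def)
qed

end
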